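(* Let $n,N,M$ be non-negative integers with $M\le N\le 2n-3$, and let $f$ be an $(n,N,M)$ $\mathbf{F}$-sequence with $M<N$ or $N<2n-3$. Then: 1. If $M<N-2$, setting $f_{N,M+1}$ to $f_{N-1,N-1}-1$ if $f_{N-1,M+1}=f_{N-1,N-1}$, and otherwise to either of $L_f(N,M+1)$ or $U_f(N,M+1)$, yields an $(n,N,M+1)$ $\mathbf{F}$-sequence. 2. If $M=N-2$, setting $f_{N,N-1}=f_{N-1,N-1}-1$ yields an $(n,N,N-1)$ $\mathbf{F}$-sequence. 3. If $M=N-1$, setting $f_{N,N}=f_{N-1,N-1}-1$ when $f_{N-1,N-1}>1$, or setting $f_{N,N}=f_{N-1,N-1}+1$ when $f_{N-1,N-1}<2n-N-1$, in either case yields an $(n,N,N)$ $\mathbf{F}$-sequence. 4. If $M=N$, setting $f_{N+1,0}$ to $f_{N,N}-1$ if $f_{N,0}=f_{N,N}$, and otherwise to either of $\max(0,f_{N,0}-1)$ or $f_{N,0}$, yields an $(n,N+1,0)$ $\mathbf{F}$-sequence.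
   Context: For a doubly indexed sequence (or matrix) $f$, define, with the convention that $f_{k,\ell}=0$ whenever $k$ or $\ell$ is negative, $$L_f(i,j):=\max\bigl(f_{i,j-1},\ f_{i-1,j}-1,\ f_{i,j-1}+f_{i-1,j}-f_{i-1,j-1}-1\bigr),\qquad U_f(i,j):=\min\bigl(f_{i-1,j},\ f_{i,j-1}+f_{i-1,j}-f_{i-1,j-1}\bigr).$$ Let $n,N,M$ be non-negative integers with $M\le N\le 2n-3$ and put $B=\max(N-1,M)$. An $(n,N,M)$ $\mathbf{F}$-sequence is a doubly indexed sequence $f_{i,j}$ of non-negative integers defined exactly for the ("valid") indices $(i,j)$ in $\{(i,j):0\le j\le i\le N-1\}\cup\{(N,j):0\le j\le M\}$, such that: (1) the diagonal entries $f_{i,i}$, $0\le i\le B$, are positive integers with $f_{0,0}=2$, $f_{i,i}=f_{i-1,i-1}\pm1$ for $1\le i\le B$, and $f_{i,i}\le 2n-i-2$ for $0\le i\le B$; (2) $L_f(i,j)\le f_{i,j}\le U_f(i,j)$ for all valid indices $(i,j)$ with $0\le j\le i-2$; (3) for all valid indices $(i,j)$ with $0\le j\le i-1$, if $f_{i-1,j}=f_{i-1,i-1}$ then $f_{i,j}=f_{i-1,i-1}-1$. *)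

theory Defs
  imports Main
begin

text \<open>A doubly indexed sequence is a function f :: nat => nat => int; only its values
  at valid indices matter.\<close>

definition fx :: "(nat \<Rightarrow> nat \<Rightarrow> int) \<Rightarrow> int \<Rightarrow> int \<Rightarrow> int" where
  "fx f k l = (if k < 0 \<or> l < 0 then 0 else f (nat k) (nat l))"

definition Lf :: "(nat \<Rightarrow> nat \<Rightarrow> int) \<Rightarrow> nat \<Rightarrow> nat \<Rightarrow> int" where
  "Lf f i j = max (fx f (int i) (int j - 1))
               (max (fx f (int i - 1) (int j) - 1)
                    (fx f (int i) (int j - 1) + fx f (int i - 1) (int j)
                       - fx f (int i - 1) (int j - 1) - 1))"

definition Uf :: "(nat \<Rightarrow> nat \<Rightarrow> int) \<Rightarrow> nat \<Rightarrow> nat \<Rightarrow> int" where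
  "Uf f i j = min (fx f (int i - 1) (int j))
               (fx f (int i) (int j - 1) + fx f (int i - 1) (int j)
                  - fx f (int i - 1) (int j - 1))"

definition valid :: "nat \<Rightarrow> nat \<Rightarrow> nat \<Rightarrow> nat \<Rightarrow> bool" where
  "valid N M i j \<longleftrightarrow> (j \<le> i \<and> i + 1 \<le> N) \<or> (i = N \<and> j \<le> M)"

text \<open>B = max(N-1, M); for N = 0 the truncated subtraction gives max 0 M = M = max(-1, M).\<close>
definition Bnd :: "nat \<Rightarrow> nat \<Rightarrow> nat" where
  "Bnd N M = max (N - 1) M"

definition Fseq :: "nat \<Rightarrow> nat \<Rightarrow> nat \<Rightarrow> (nat \<Rightarrow> nat \<Rightarrow> int) \<Rightarrow> bool" where
  "Fseq n N M f \<longleftrightarrow>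
     (\<forall>i j. valid N M i j \<longrightarrow> f i j \<ge> 0) \<and>
     \<comment> \<open>(1) diagonal\<close>
     f 0 0 = 2 \<and>
     (\<forall>i \<le> Bnd N M. f i i > 0 \<and> f i i \<le> 2 * int n - int i - 2) \<and>
     (\<forall>i. 1 \<le> i \<and> i \<le> Bnd N M \<longrightarrow>
            f i i = f (i - 1) (i - 1) + 1 \<or> f i i = f (i - 1) (i - 1) - 1) \<and>
     \<comment> \<open>(2) interval condition for j <= i - 2\<close>
     (\<forall>i j. valid N M i j \<and> j + 2 \<le> i \<longrightarrow> Lf f i j \<le> f i j \<and> f i j \<le> Uf f i j) \<and>
     \<comment> \<open>(3) forced value\<close>
     (\<forall>i j. valid N M i j \<and> j + 1 \<le> i \<longrightarrow>
            f (i - 1) j = f (i - 1) (i - 1) \<longrightarrow> f i j = f (i - 1) (i - 1) - 1)"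

definition setf :: "(nat \<Rightarrow> nat \<Rightarrow> int) \<Rightarrow> nat \<Rightarrow> nat \<Rightarrow> int \<Rightarrow> (nat \<Rightarrow> nat \<Rightarrow> int)" where
  "setf f i j v = f(i := (f i)(j := v))"

end

theory Submission imports Defs begin

lemma fx_int[simp]: "fx f (int i) (int j) = f i j"
  by (simp add: fx_def)
lemma fx_A: "1 \<le> i \<Longrightarrow> fx f (int i - 1) (int j) = f (i-1) j"
  unfolding fx_def by (simp add: nat_diff_distrib)
lemma fx_B: "1 \<le> j \<Longrightarrow> fx f (int i) (int j - 1) = f i (j-1)"
  unfolding fx_def by (simp add: nat_diff_distrib)
lemma fx_C: "1 \<le> i \<Longrightarrow> 1 \<le> j \<Longrightarrow> fx f (int i - 1) (int j - 1) = f (i-1) (j-1)"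
  unfolding fx_def by (simp add: nat_diff_distrib)
lemma fx_A0: "1 \<le> i \<Longrightarrow> fx f (int i - 1) 0 = f (i-1) 0"
  using fx_A[of i f 0] by simp
lemma fx_neg1a[simp]: "fx f (-1) l = 0" by (simp add: fx_def)
lemma fx_neg1b[simp]: "fx f k (-1) = 0" by (simp add: fx_def)

lemma Lf_expl: "1 \<le> i \<Longrightarrow> 1 \<le> j \<Longrightarrow> Lf f i j = max (f i (j-1)) (max (f (i-1) j - 1)
   (f i (j-1) + f (i-1) j - f (i-1) (j-1) - 1))"
  by (simp add: Lf_def fx_A fx_B fx_C)
lemma Uf_expl: "1 \<le> i \<Longrightarrow> 1 \<le> j \<Longrightarrow> Uf f i j = min (f (i-1) j)
   (f i (j-1) + f (i-1) j - f (i-1) (j-1))"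
  by (simp add: Uf_def fx_A fx_B fx_C)
lemma Lf_expl0: "1 \<le> i \<Longrightarrow> Lf f i 0 = max 0 (f (i-1) 0 - 1)"
  by (simp add: Lf_def fx_A0)
lemma Uf_expl0: "1 \<le> i \<Longrightarrow> Uf f i 0 = f (i-1) 0"
  by (simp add: Uf_def fx_A0)
lemma Uf_le: "1 \<le> i \<Longrightarrow> Uf f i j \<le> f (i-1) j"
  by (cases "j = 0") (simp_all add: Uf_expl Uf_expl0)
lemma Lf_ge: "1 \<le> i \<Longrightarrow> f (i-1) j - 1 \<le> Lf f i j"
  by (cases "j = 0") (simp_all add: Lf_expl Lf_expl0 le_max_iff_disj)
lemma Lf_ge2: "1 \<le> i \<Longrightarrow> 1 \<le> j \<Longrightarrow> f i (j-1) \<le> Lf f i j"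
  by (simp add: Lf_expl)

lemma fx_setf: "\<not>(k = int p \<and> l = int q) \<Longrightarrow> fx (setf f p q v) k l = fx f k l"
  unfolding fx_def setf_def by auto

lemma LU_setf: "\<not>(i = p \<and> j = Suc q) \<Longrightarrow> i \<noteq> Suc p \<Longrightarrow>
   Lf (setf f p q v) i j = Lf f i j \<and> Uf (setf f p q v) i j = Uf f i j"
proof -
  assume a: "\<not>(i = p \<and> j = Suc q)" "i \<noteq> Suc p"
  have 1: "fx (setf f p q v) (int i) (int j - 1) = fx f (int i) (int j - 1)"
    by (rule fx_setf) (use a in linarith)
  have 2: "fx (setf f p q v) (int i - 1) (int j) = fx f (int i - 1) (int j)"
    by (rule fx_setf) (use a in linarith)
  have 3: "fx (setf f p q v) (int i - 1) (int j - 1) = fx f (int i - 1) (int j - 1)"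
    by (rule fx_setf) (use a in linarith)
  show ?thesis unfolding Lf_def Uf_def 1 2 3 by simp
qed

lemma setf_other[simp]: "\<not>(i = p \<and> j = q) \<Longrightarrow> setf f p q v i j = f i j"
  unfolding setf_def by auto
lemma setf_same[simp]: "setf f p q v p q = v"
  unfolding setf_def by auto

lemma key:
  assumes F: "Fseq n N M f"
  shows "valid N M i j \<Longrightarrow> j < i \<Longrightarrow> f i j \<le> f (i-1) (i-1) - 1"
proof (induction i arbitrary: j)
  case 0 then show ?case by simp
next
  case (Suc k)
  have C2: "\<And>i j. valid N M i j \<Longrightarrow> j + 2 \<le> i \<Longrightarrow> Lf f i j \<le> f i j \<and> f i j \<le> Uf f i j"
    and C3: "\<And>i j. valid N M i j \<Longrightarrow> j + 1 \<le> i \<Longrightarrow>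
            f (i - 1) j = f (i - 1) (i - 1) \<Longrightarrow> f i j = f (i - 1) (i - 1) - 1"
    and D: "\<And>i. 1 \<le> i \<Longrightarrow> i \<le> Bnd N M \<Longrightarrow>
            f i i = f (i - 1) (i - 1) + 1 \<or> f i i = f (i - 1) (i - 1) - 1"
    using F unfolding Fseq_def by blast+
  show ?case
  proof (cases "j = k")
    case True
    then show ?thesis using C3[OF Suc.prems(1)] by simp
  next
    case False
    with Suc.prems have jk: "j < k" by simp
    have vk: "valid N M k j" using Suc.prems jk unfolding valid_def by auto
    have kB: "k \<le> Bnd N M" using Suc.prems unfolding valid_def Bnd_def by auto
    have "f k j \<le> f (k-1) (k-1) - 1" using Suc.IH[OF vk jk] .
    moreover have "f k k = f (k - 1) (k - 1) + 1 \<or> f k k = f (k - 1) (k - 1) - 1"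
      using D[of k] kB jk by simp
    ultimately have le: "f k j \<le> f k k" by auto
    have up: "f (Suc k) j \<le> f k j"
      using C2[OF Suc.prems(1)] jk Uf_le[of "Suc k" f j] by simp
    show ?thesis
    proof (cases "f k j = f k k")
      case True
      then show ?thesis using C3[OF Suc.prems(1)] jk by simp
    next
      case False
      then show ?thesis using le up by simp
    qed
  qed
qed


lemma extend:
  assumes F: "Fseq n N M f"
  and V: "\<And>i j. valid N' M' i j \<longleftrightarrow> valid N M i j \<or> (i = p \<and> j = q)"
  and nr: "\<And>i j. valid N M i j \<Longrightarrow> \<not>(i = p \<and> j = Suc q) \<and> i \<noteq> Suc p \<and> \<not>(i = p \<and> j = q)"
  and v0: "v \<ge> 0"
  and DG: "setf f p q v 0 0 = 2 \<and>
     (\<forall>i \<le> Bnd N' M'. setf f p q v i i > 0 \<and> setf f p q v i i \<le> 2 * int n - int i - 2) \<and>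
     (\<forall>i. 1 \<le> i \<and> i \<le> Bnd N' M' \<longrightarrow>
            setf f p q v i i = setf f p q v (i - 1) (i - 1) + 1 \<or> setf f p q v i i = setf f p q v (i - 1) (i - 1) - 1)"
  and C2new: "q+2 \<le> p \<Longrightarrow> Lf f p q \<le> v \<and> v \<le> Uf f p q"
  and C3new: "q+1 \<le> p \<Longrightarrow> f (p-1) q = f (p-1) (p-1) \<Longrightarrow> v = f (p-1) (p-1) - 1"
  shows "Fseq n N' M' (setf f p q v)"
proof -
  have N0: "\<And>i j. valid N M i j \<Longrightarrow> f i j \<ge> 0"
    and C2: "\<And>i j. valid N M i j \<Longrightarrow> j + 2 \<le> i \<Longrightarrow> Lf f i j \<le> f i j \<and> f i j \<le> Uf f i j"
    and C3: "\<And>i j. valid N M i j \<Longrightarrow> j + 1 \<le> i \<Longrightarrow>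
            f (i - 1) j = f (i - 1) (i - 1) \<Longrightarrow> f i j = f (i - 1) (i - 1) - 1"
    using F unfolding Fseq_def by blast+
  let ?g = "setf f p q v"
  have A: "\<forall>i j. valid N' M' i j \<longrightarrow> ?g i j \<ge> 0"
  proof (intro allI impI)
    fix i j assume "valid N' M' i j"
    then consider "valid N M i j" | "i = p \<and> j = q" using V by blast
    then show "?g i j \<ge> 0"
    proof cases
      case 1 then show ?thesis using nr[OF 1] N0[OF 1] by simp
    next
      case 2 then show ?thesis using v0 by simp
    qed
  qed
  have B: "\<forall>i j. valid N' M' i j \<and> j + 2 \<le> i \<longrightarrow> Lf ?g i j \<le> ?g i j \<and> ?g i j \<le> Uf ?g i j"
  proof (intro allI impI)
    fix i j assume H: "valid N' M' i j \<and> j + 2 \<le> i"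
    then consider "valid N M i j" | "i = p \<and> j = q" using V by blast
    then show "Lf ?g i j \<le> ?g i j \<and> ?g i j \<le> Uf ?g i j"
    proof cases
      case 1 then show ?thesis using nr[OF 1] C2[OF 1] H LU_setf[of i p j q f v] by simp
    next
      case 2 then show ?thesis using C2new H LU_setf[of p p q q f v] by simp
    qed
  qed
  have C: "\<forall>i j. valid N' M' i j \<and> j + 1 \<le> i \<longrightarrow>
            ?g (i - 1) j = ?g (i - 1) (i - 1) \<longrightarrow> ?g i j = ?g (i - 1) (i - 1) - 1"
  proof (intro allI impI)
    fix i j assume H: "valid N' M' i j \<and> j + 1 \<le> i" and E: "?g (i - 1) j = ?g (i - 1) (i - 1)"
    then consider "valid N M i j" | "i = p \<and> j = q" using V by blast
    then show "?g i j = ?g (i - 1) (i - 1) - 1"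
    proof cases
      case 1
      have "i - 1 \<noteq> p" using nr[OF 1] H by auto
      then show ?thesis using nr[OF 1] C3[OF 1] H E by simp
    next
      case 2
      have "i - 1 \<noteq> p" using H 2 by auto
      then show ?thesis using C3new H E 2 by simp
    qed
  qed
  have DG1: "?g 0 0 = 2" using DG by (rule conjunct1)
  have DG2: "\<forall>i \<le> Bnd N' M'. ?g i i > 0 \<and> ?g i i \<le> 2 * int n - int i - 2"
    using DG by (rule conjunct1[OF conjunct2])
  have DG3: "\<forall>i. 1 \<le> i \<and> i \<le> Bnd N' M' \<longrightarrow>
            ?g i i = ?g (i - 1) (i - 1) + 1 \<or> ?g i i = ?g (i - 1) (i - 1) - 1"
    using DG by (rule conjunct2[OF conjunct2])
  show ?thesis unfolding Fseq_def
    by (intro conjI; fact A DG1 DG2 DG3 B C)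
qed

lemma DG_same:
  assumes F: "Fseq n N M f" and pq: "p \<noteq> q" and BB: "Bnd N' M' = Bnd N M"
  shows "setf f p q v 0 0 = 2 \<and>
     (\<forall>i \<le> Bnd N' M'. setf f p q v i i > 0 \<and> setf f p q v i i \<le> 2 * int n - int i - 2) \<and>
     (\<forall>i. 1 \<le> i \<and> i \<le> Bnd N' M' \<longrightarrow>
            setf f p q v i i = setf f p q v (i - 1) (i - 1) + 1 \<or> setf f p q v i i = setf f p q v (i - 1) (i - 1) - 1)"
proof -
  have e: "\<And>i. setf f p q v i i = f i i" using pq unfolding setf_def by auto
  have D00: "f 0 0 = 2"
    and DP: "\<forall>i \<le> Bnd N M. f i i > 0 \<and> f i i \<le> 2 * int n - int i - 2"
    and DS: "\<forall>i. 1 \<le> i \<and> i \<le> Bnd N M \<longrightarrow>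
            f i i = f (i - 1) (i - 1) + 1 \<or> f i i = f (i - 1) (i - 1) - 1"
    using F unfolding Fseq_def by blast+
  show ?thesis unfolding e BB using D00 DP DS by (intro conjI)
qed


lemma parity:
  assumes F: "Fseq n N M f"
  shows "i \<le> Bnd N M \<Longrightarrow> even (f i i + int i)"
proof (induction i)
  case 0 then show ?case using F unfolding Fseq_def by simp
next
  case (Suc k)
  have DS: "\<forall>i. 1 \<le> i \<and> i \<le> Bnd N M \<longrightarrow>
            f i i = f (i - 1) (i - 1) + 1 \<or> f i i = f (i - 1) (i - 1) - 1"
    using F unfolding Fseq_def by blast
  have "f (Suc k) (Suc k) = f k k + 1 \<or> f (Suc k) (Suc k) = f k k - 1"
    using DS Suc.prems by (metis diff_Suc_1 le_add1 plus_1_eq_Suc)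
  then show ?case using Suc by auto
qed

theorem proposition1:
  fixes n N M :: nat and f :: "nat \<Rightarrow> nat \<Rightarrow> int"
  assumes "M \<le> N" and "int N \<le> 2 * int n - 3"
    and "Fseq n N M f"
    and "M < N \<or> int N < 2 * int n - 3"
  shows
    "(M + 2 < N \<longrightarrow>
        (f (N - 1) (M + 1) = f (N - 1) (N - 1) \<longrightarrow>
           Fseq n N (M + 1) (setf f N (M + 1) (f (N - 1) (N - 1) - 1))) \<and>
        (f (N - 1) (M + 1) \<noteq> f (N - 1) (N - 1) \<longrightarrow>
           Fseq n N (M + 1) (setf f N (M + 1) (Lf f N (M + 1))) \<and>
           Fseq n N (M + 1) (setf f N (M + 1) (Uf f N (M + 1))))) \<and>
     (M + 2 = N \<longrightarrow>
        Fseq n N (N - 1) (setf f N (N - 1) (f (N - 1) (N - 1) - 1))) \<and>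
     (M + 1 = N \<longrightarrow>
        (f (N - 1) (N - 1) > 1 \<longrightarrow>
           Fseq n N N (setf f N N (f (N - 1) (N - 1) - 1))) \<and>
        (f (N - 1) (N - 1) < 2 * int n - int N - 1 \<longrightarrow>
           Fseq n N N (setf f N N (f (N - 1) (N - 1) + 1)))) \<and>
     (M = N \<longrightarrow>
        (f N 0 = f N N \<longrightarrow>
           Fseq n (N + 1) 0 (setf f (N + 1) 0 (f N N - 1))) \<and>
        (f N 0 \<noteq> f N N \<longrightarrow>
           Fseq n (N + 1) 0 (setf f (N + 1) 0 (max 0 (f N 0 - 1))) \<and>
           Fseq n (N + 1) 0 (setf f (N + 1) 0 (f N 0))))"
proof -
  note F = assms(3)
  have N0: "\<And>i j. valid N M i j \<Longrightarrow> f i j \<ge> 0"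
    and DP: "\<And>i. i \<le> Bnd N M \<Longrightarrow> f i i > 0 \<and> f i i \<le> 2 * int n - int i - 2"
    and C2: "\<And>i j. valid N M i j \<Longrightarrow> j + 2 \<le> i \<Longrightarrow> Lf f i j \<le> f i j \<and> f i j \<le> Uf f i j"
    and C3: "\<And>i j. valid N M i j \<Longrightarrow> j + 1 \<le> i \<Longrightarrow>
            f (i - 1) j = f (i - 1) (i - 1) \<Longrightarrow> f i j = f (i - 1) (i - 1) - 1"
    and DS: "\<And>i. 1 \<le> i \<Longrightarrow> i \<le> Bnd N M \<Longrightarrow>
            f i i = f (i - 1) (i - 1) + 1 \<or> f i i = f (i - 1) (i - 1) - 1"
    and D00: "f 0 0 = 2"
    using F unfolding Fseq_def by blast+
  have VM: "\<And>i j. valid N (M+1) i j \<longleftrightarrow> valid N M i j \<or> (i = N \<and> j = M+1)"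
    if "M < N" using that unfolding valid_def by auto
  have nrM: "\<And>i j. valid N M i j \<Longrightarrow> \<not>(i = N \<and> j = Suc (M+1)) \<and> i \<noteq> Suc N \<and> \<not>(i = N \<and> j = M+1)"
    unfolding valid_def by auto
  have keyF: "\<And>i j. valid N M i j \<Longrightarrow> j < i \<Longrightarrow> f i j \<le> f (i-1) (i-1) - 1"
    using key[OF F] by blast
  have part1: "M + 2 < N \<longrightarrow>
        (f (N - 1) (M + 1) = f (N - 1) (N - 1) \<longrightarrow>
           Fseq n N (M + 1) (setf f N (M + 1) (f (N - 1) (N - 1) - 1))) \<and>
        (f (N - 1) (M + 1) \<noteq> f (N - 1) (N - 1) \<longrightarrow>
           Fseq n N (M + 1) (setf f N (M + 1) (Lf f N (M + 1))) \<and>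
           Fseq n N (M + 1) (setf f N (M + 1) (Uf f N (M + 1))))"
  proof (intro impI conjI)
    assume L: "M + 2 < N"
    have V: "\<And>i j. valid N (M+1) i j \<longleftrightarrow> valid N M i j \<or> (i = N \<and> j = M+1)"
      using VM L by simp
    have BB: "Bnd N (M+1) = Bnd N M" using L unfolding Bnd_def by simp
    have pq: "N \<noteq> M + 1" using L by simp
    have dpos: "f (N-1) (N-1) > 0" using DP[of "N-1"] unfolding Bnd_def by simp
    have vNM: "valid N M N M" unfolding valid_def by simp
    have a1: "f N M \<le> f (N-1) (N-1) - 1" using keyF[OF vNM] L by simp
    have a2: "f (N-1) M - 1 \<le> f N M" "f N M \<le> f (N-1) M"
      using C2[OF vNM] L Lf_ge[of N f M] Uf_le[of N f M] by auto
    have a0: "f N M \<ge> 0" using N0[OF vNM] .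
    have LE: "Lf f N (M + 1) = max (f N M) (max (f (N-1) (M+1) - 1)
       (f N M + f (N-1) (M+1) - f (N-1) M - 1))"
     and UE: "Uf f N (M + 1) = min (f (N-1) (M+1)) (f N M + f (N-1) (M+1) - f (N-1) M)"
      using Lf_expl[of N "M+1" f] Uf_expl[of N "M+1" f] L by auto
    have mono: "f (N-1) M \<le> f (N-1) (M+1)"
    proof (cases "M + 4 \<le> N")
      case True
      have v: "valid N M (N-1) (M+1)" using True unfolding valid_def by auto
      have h1: "Lf f (N-1) (M+1) \<le> f (N-1) (M+1)" using C2[OF v] True by simp
      have h2: "f (N-1) M \<le> Lf f (N-1) (M+1)" using Lf_ge2[of "N-1" "M+1" f] True by simp
      show ?thesis using h1 h2 by simp
    next
      case False
      then have NM: "N = M + 3" using L by simp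
      have v: "valid N M (N-1) (M+1)" using NM unfolding valid_def by auto
      have "f (N-1) (M+1) = f (N-2) (N-2) - 1" using C3[OF v] NM by simp
      moreover have "f (N-1) M \<le> f (N-2) (N-2) - 1"
        using keyF[of "N-1" M] NM unfolding valid_def by simp
      ultimately show ?thesis by simp
    qed
    {
      assume E: "f (N - 1) (M + 1) = f (N - 1) (N - 1)"
        {
        have h0: "0 \<le> (f (N - 1) (N - 1) - 1)" using dpos by simp
        have h2: "(M + 1)+2 \<le> N \<Longrightarrow> Lf f N (M + 1) \<le> (f (N - 1) (N - 1) - 1) \<and> (f (N - 1) (N - 1) - 1) \<le> Uf f N (M + 1)" using LE UE E a1 a2 by simp
        have h3: "(M + 1)+1 \<le> N \<Longrightarrow> f (N-1) (M + 1) = f (N-1) (N-1) \<Longrightarrow> (f (N - 1) (N - 1) - 1) = f (N-1) (N-1) - 1" by simp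
        show "Fseq n N (M + 1) (setf f N (M + 1) (f (N - 1) (N - 1) - 1))" by (rule extend[OF F V nrM h0 DG_same[OF F pq BB] h2 h3])
      }
    }
    {
      assume E: "f (N - 1) (M + 1) \<noteq> f (N - 1) (N - 1)"
      have LU: "Lf f N (M + 1) \<le> Uf f N (M + 1)" "0 \<le> Lf f N (M + 1)"
        unfolding LE UE using a0 a2 mono by (auto simp: max_def min_def)
        {
        have h0: "0 \<le> (Lf f N (M + 1))" using LU by simp
        have h2: "(M + 1)+2 \<le> N \<Longrightarrow> Lf f N (M + 1) \<le> (Lf f N (M + 1)) \<and> (Lf f N (M + 1)) \<le> Uf f N (M + 1)" using LU by simp
        have h3: "(M + 1)+1 \<le> N \<Longrightarrow> f (N-1) (M + 1) = f (N-1) (N-1) \<Longrightarrow> (Lf f N (M + 1)) = f (N-1) (N-1) - 1" using E by simp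
        show "Fseq n N (M + 1) (setf f N (M + 1) (Lf f N (M + 1)))" by (rule extend[OF F V nrM h0 DG_same[OF F pq BB] h2 h3])
      }
        {
        have h0: "0 \<le> (Uf f N (M + 1))" using LU by simp
        have h2: "(M + 1)+2 \<le> N \<Longrightarrow> Lf f N (M + 1) \<le> (Uf f N (M + 1)) \<and> (Uf f N (M + 1)) \<le> Uf f N (M + 1)" using LU by simp
        have h3: "(M + 1)+1 \<le> N \<Longrightarrow> f (N-1) (M + 1) = f (N-1) (N-1) \<Longrightarrow> (Uf f N (M + 1)) = f (N-1) (N-1) - 1" using E by simp
        show "Fseq n N (M + 1) (setf f N (M + 1) (Uf f N (M + 1)))" by (rule extend[OF F V nrM h0 DG_same[OF F pq BB] h2 h3])
      }
    }
  qed
  have part2: "M + 2 = N \<longrightarrow>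
        Fseq n N (N - 1) (setf f N (N - 1) (f (N - 1) (N - 1) - 1))"
  proof
    assume L: "M + 2 = N"
    then have e: "N - 1 = M + 1" by simp
    have V: "\<And>i j. valid N (M+1) i j \<longleftrightarrow> valid N M i j \<or> (i = N \<and> j = M+1)"
      using VM L by simp
    have BB: "Bnd N (M+1) = Bnd N M" using L unfolding Bnd_def by simp
    have pq: "N \<noteq> M + 1" using L by simp
    have dpos: "f (N-1) (N-1) > 0" using DP[of "N-1"] unfolding Bnd_def by simp
    have "Fseq n N (M + 1) (setf f N (M + 1) (f (N - 1) (N - 1) - 1))"
    proof -
      {
        have h0: "0 \<le> (f (N - 1) (N - 1) - 1)" using dpos by simp
        have h2: "(M + 1)+2 \<le> N \<Longrightarrow> Lf f N (M + 1) \<le> (f (N - 1) (N - 1) - 1) \<and> (f (N - 1) (N - 1) - 1) \<le> Uf f N (M + 1)" using L by simp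
        have h3: "(M + 1)+1 \<le> N \<Longrightarrow> f (N-1) (M + 1) = f (N-1) (N-1) \<Longrightarrow> (f (N - 1) (N - 1) - 1) = f (N-1) (N-1) - 1" using L by simp
        show "Fseq n N (M + 1) (setf f N (M + 1) (f (N - 1) (N - 1) - 1))" by (rule extend[OF F V nrM h0 DG_same[OF F pq BB] h2 h3])
      }
    qed
    then show "Fseq n N (N - 1) (setf f N (N - 1) (f (N - 1) (N - 1) - 1))" unfolding e .
  qed
  have part3: "M + 1 = N \<longrightarrow>
        (f (N - 1) (N - 1) > 1 \<longrightarrow>
           Fseq n N N (setf f N N (f (N - 1) (N - 1) - 1))) \<and>
        (f (N - 1) (N - 1) < 2 * int n - int N - 1 \<longrightarrow>
           Fseq n N N (setf f N N (f (N - 1) (N - 1) + 1)))"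
  proof (intro impI conjI)
    assume L: "M + 1 = N"
    have V: "\<And>i j. valid N N i j \<longleftrightarrow> valid N M i j \<or> (i = N \<and> j = N)"
      using L unfolding valid_def by auto
    have nr: "\<And>i j. valid N M i j \<Longrightarrow> \<not>(i = N \<and> j = Suc N) \<and> i \<noteq> Suc N \<and> \<not>(i = N \<and> j = N)"
      using L unfolding valid_def by auto
    have BN: "Bnd N N = N" "Bnd N M = N - 1" using L unfolding Bnd_def by auto
    have NN0: "int (N-1) = int N - 1" using L by auto
    have dB: "f (N-1) (N-1) > 0" "f (N-1) (N-1) \<le> 2 * int n - int (N-1) - 2"
      using DP[of "N-1"] BN by auto
    have DGgen: "setf f N N v 0 0 = 2 \<and>
     (\<forall>i \<le> Bnd N N. setf f N N v i i > 0 \<and> setf f N N v i i \<le> 2 * int n - int i - 2) \<and>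
     (\<forall>i. 1 \<le> i \<and> i \<le> Bnd N N \<longrightarrow>
            setf f N N v i i = setf f N N v (i - 1) (i - 1) + 1 \<or> setf f N N v i i = setf f N N v (i - 1) (i - 1) - 1)"
      if v1: "v > 0" "v \<le> 2 * int n - int N - 2"
        and v2: "v = f (N-1) (N-1) + 1 \<or> v = f (N-1) (N-1) - 1" for v
    proof (intro conjI allI impI)
      show "setf f N N v 0 0 = 2" using D00 L by simp
    next
      fix i assume i: "i \<le> Bnd N N"
      show "setf f N N v i i > 0" using i DP[of i] BN v1 by (cases "i = N") auto
      show "setf f N N v i i \<le> 2 * int n - int i - 2" using i DP[of i] BN v1 by (cases "i = N") auto
    next
      fix i assume i: "1 \<le> i \<and> i \<le> Bnd N N"
      show "setf f N N v i i = setf f N N v (i - 1) (i - 1) + 1 \<or> setf f N N v i i = setf f N N v (i - 1) (i - 1) - 1"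
        using i DS[of i] BN v2 by (cases "i = N") auto
    qed
    {
      assume G: "f (N - 1) (N - 1) > 1"
        {
        have h0: "0 \<le> (f (N - 1) (N - 1) - 1)" using G by simp
        have h2: "N+2 \<le> N \<Longrightarrow> Lf f N N \<le> (f (N - 1) (N - 1) - 1) \<and> (f (N - 1) (N - 1) - 1) \<le> Uf f N N" using L by simp
        have h3: "N+1 \<le> N \<Longrightarrow> f (N-1) N = f (N-1) (N-1) \<Longrightarrow> (f (N - 1) (N - 1) - 1) = f (N-1) (N-1) - 1" using L by simp
        have hd: "setf f N N ((f (N - 1) (N - 1) - 1)) 0 0 = 2 \<and> (\<forall>i \<le> Bnd N N. setf f N N ((f (N - 1) (N - 1) - 1)) i i > 0 \<and> setf f N N ((f (N - 1) (N - 1) - 1)) i i \<le> 2 * int n - int i - 2) \<and> (\<forall>i. 1 \<le> i \<and> i \<le> Bnd N N \<longrightarrow> setf f N N ((f (N - 1) (N - 1) - 1)) i i = setf f N N ((f (N - 1) (N - 1) - 1)) (i - 1) (i - 1) + 1 \<or> setf f N N ((f (N - 1) (N - 1) - 1)) i i = setf f N N ((f (N - 1) (N - 1) - 1)) (i - 1) (i - 1) - 1)" by (rule DGgen) (use G dB NN0 in auto)+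
        show "Fseq n N N (setf f N N (f (N - 1) (N - 1) - 1))" by (rule extend[OF F V nr h0 hd h2 h3])
      }
    }
    {
      assume G: "f (N - 1) (N - 1) < 2 * int n - int N - 1"
      have ev: "even (f (N-1) (N-1) + int (N-1))" using parity[OF F, of "N-1"] BN by simp
      then obtain k where k: "f (N-1) (N-1) + int (N-1) = 2 * k" by (rule evenE)
      have NN: "int (N-1) = int N - 1" using L by auto
      have G2: "f (N - 1) (N - 1) + 1 \<le> 2 * int n - int N - 2"
        using G k NN by presburger
        {
        have h0: "0 \<le> (f (N - 1) (N - 1) + 1)" using dB by simp
        have h2: "N+2 \<le> N \<Longrightarrow> Lf f N N \<le> (f (N - 1) (N - 1) + 1) \<and> (f (N - 1) (N - 1) + 1) \<le> Uf f N N" using L by simp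
        have h3: "N+1 \<le> N \<Longrightarrow> f (N-1) N = f (N-1) (N-1) \<Longrightarrow> (f (N - 1) (N - 1) + 1) = f (N-1) (N-1) - 1" using L by simp
        have hd: "setf f N N ((f (N - 1) (N - 1) + 1)) 0 0 = 2 \<and> (\<forall>i \<le> Bnd N N. setf f N N ((f (N - 1) (N - 1) + 1)) i i > 0 \<and> setf f N N ((f (N - 1) (N - 1) + 1)) i i \<le> 2 * int n - int i - 2) \<and> (\<forall>i. 1 \<le> i \<and> i \<le> Bnd N N \<longrightarrow> setf f N N ((f (N - 1) (N - 1) + 1)) i i = setf f N N ((f (N - 1) (N - 1) + 1)) (i - 1) (i - 1) + 1 \<or> setf f N N ((f (N - 1) (N - 1) + 1)) i i = setf f N N ((f (N - 1) (N - 1) + 1)) (i - 1) (i - 1) - 1)" by (rule DGgen) (use G2 dB NN0 in auto)+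
        show "Fseq n N N (setf f N N (f (N - 1) (N - 1) + 1))" by (rule extend[OF F V nr h0 hd h2 h3])
      }
    }
  qed
  have part4: "M = N \<longrightarrow>
        (f N 0 = f N N \<longrightarrow>
           Fseq n (N + 1) 0 (setf f (N + 1) 0 (f N N - 1))) \<and>
        (f N 0 \<noteq> f N N \<longrightarrow>
           Fseq n (N + 1) 0 (setf f (N + 1) 0 (max 0 (f N 0 - 1))) \<and>
           Fseq n (N + 1) 0 (setf f (N + 1) 0 (f N 0)))"
  proof (intro impI conjI)
    assume L: "M = N"
    have V: "\<And>i j. valid (N+1) 0 i j \<longleftrightarrow> valid N M i j \<or> (i = N+1 \<and> j = 0)"
      using L unfolding valid_def by auto
    have nr: "\<And>i j. valid N M i j \<Longrightarrow> \<not>(i = N+1 \<and> j = Suc 0) \<and> i \<noteq> Suc (N+1) \<and> \<not>(i = N+1 \<and> j = 0)"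
      using L unfolding valid_def by auto
    have BB: "Bnd (N+1) 0 = Bnd N M" using L unfolding Bnd_def by simp
    have pq: "N + 1 \<noteq> 0" by simp
    have dpos: "f N N > 0" using DP[of N] L unfolding Bnd_def by simp
    have f0: "f N 0 \<ge> 0" using N0[of N 0] L unfolding valid_def by simp
    have LE: "Lf f (N+1) 0 = max 0 (f N 0 - 1)" and UE: "Uf f (N+1) 0 = f N 0"
      using Lf_expl0[of "N+1" f] Uf_expl0[of "N+1" f] by auto
    {
      assume E: "f N 0 = f N N"
      {
        have h0: "0 \<le> (f N N - 1)" using dpos by simp
        have h2: "0+2 \<le> (N + 1) \<Longrightarrow> Lf f (N + 1) 0 \<le> (f N N - 1) \<and> (f N N - 1) \<le> Uf f (N + 1) 0" using LE UE E dpos by simp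
        have h3: "0+1 \<le> (N + 1) \<Longrightarrow> f ((N + 1)-1) 0 = f ((N + 1)-1) ((N + 1)-1) \<Longrightarrow> (f N N - 1) = f ((N + 1)-1) ((N + 1)-1) - 1" using E by simp
        show "Fseq n (N + 1) 0 (setf f (N + 1) 0 (f N N - 1))" by (rule extend[OF F V nr h0 DG_same[OF F pq BB] h2 h3])
      }
    }
    {
      assume E: "f N 0 \<noteq> f N N"
      {
        have h0: "0 \<le> (max 0 (f N 0 - 1))" by simp
        have h2: "0+2 \<le> (N + 1) \<Longrightarrow> Lf f (N + 1) 0 \<le> (max 0 (f N 0 - 1)) \<and> (max 0 (f N 0 - 1)) \<le> Uf f (N + 1) 0" using LE UE f0 by simp
        have h3: "0+1 \<le> (N + 1) \<Longrightarrow> f ((N + 1)-1) 0 = f ((N + 1)-1) ((N + 1)-1) \<Longrightarrow> (max 0 (f N 0 - 1)) = f ((N + 1)-1) ((N + 1)-1) - 1" using E by simp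
        show "Fseq n (N + 1) 0 (setf f (N + 1) 0 (max 0 (f N 0 - 1)))" by (rule extend[OF F V nr h0 DG_same[OF F pq BB] h2 h3])
      }
      {
        have h0: "0 \<le> (f N 0)" using f0 by simp
        have h2: "0+2 \<le> (N + 1) \<Longrightarrow> Lf f (N + 1) 0 \<le> (f N 0) \<and> (f N 0) \<le> Uf f (N + 1) 0" using LE UE f0 by simp
        have h3: "0+1 \<le> (N + 1) \<Longrightarrow> f ((N + 1)-1) 0 = f ((N + 1)-1) ((N + 1)-1) \<Longrightarrow> (f N 0) = f ((N + 1)-1) ((N + 1)-1) - 1" using E by simp
        show "Fseq n (N + 1) 0 (setf f (N + 1) 0 (f N 0))" by (rule extend[OF F V nr h0 DG_same[OF F pq BB] h2 h3])
      }
    }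
  qed
  show ?thesis using part1 part2 part3 part4 by blast
qed

end
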